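(* Let $Q$ be a set and let $\{*_\alpha\}_{\alpha\in\Lambda}$ be a family of quandle operations on $Q$ that are pairwise distributive with respect to each other, i.e. $(a*_\alpha b)*_\beta c=(a*_\beta c)*_\alpha(b*_\beta c)$ for all $\alpha,\beta\in\Lambda$ and $a,b,c\in Q$. Let $F$ be the free group on the symbols $*_\alpha$, and for $w\in F$ let $\star_w$ be the operation defined by $a\star_w b=(\cdots((a\,s_1\,b)\,s_2\,b)\cdots)\,s_k\,b$ for $w=s_1\cdots s_k$ (the letter $*_\alpha^{-1}$ acting as the right inverse operation of $*_\alpha$). Then the group $Q_F=\{(Q,\star_w)\mid w\in F\}$, with quandle multiplication $(Q,\star_w)(Q,\star_v)=(Q,\star_{wv})$, is commutative; that is, $\star_{wv}=\star_{vw}$ for all $w,v\in F$.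
   Context: A quandle operation on $Q$ is a binary operation $*$ with $x*x=x$, unique right division, and $(x*y)*z=(x*z)*(y*z)$. The right inverse $\bar*$ of $*$ is defined by $a=c*b\iff c=a\,\bar*\,b$. Quandle multiplication of two structures on the same set: $(Q,\circ)(Q,* )=(Q,\circ* )$ with $a\,(\circ* )\,b=(a\circ b)*b$; the unit of $Q_F$ is the trivial quandle ($a\star b=a$) and the inverse of $(Q,\star_w)$ is $(Q,\star_{w^{-1}})$. *)

theory Defs
  imports Main
begin

definition is_quandle :: "('q \<Rightarrow> 'q \<Rightarrow> 'q) \<Rightarrow> bool" where
  "is_quandle op \<longleftrightarrow>
     (\<forall>x. op x x = x) \<and>
     (\<forall>a b. \<exists>!c. op c b = a) \<and>
     (\<forall>x y z. op (op x y) z = op (op x z) (op y z))"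

definition rinv :: "('q \<Rightarrow> 'q \<Rightarrow> 'q) \<Rightarrow> 'q \<Rightarrow> 'q \<Rightarrow> 'q" where
  "rinv op a b = (THE c. op c b = a)"

text \<open>Words in the free group on the symbols, as lists of letters:
  (alpha, True) is the letter for the operation of index alpha, (alpha, False) its inverse.\<close>
type_synonym 'l fword = "('l \<times> bool) list"

definition star :: "('l \<Rightarrow> 'q \<Rightarrow> 'q \<Rightarrow> 'q) \<Rightarrow> 'l fword \<Rightarrow> 'q \<Rightarrow> 'q \<Rightarrow> 'q" where
  "star ops w a b =
     foldl (\<lambda>x (al, s). if s then ops al x b else rinv (ops al) x b) a w"

end

theory Submission
  imports Defs
begin

lemma rinv_l: assumes "is_quandle op" shows "op (rinv op x b) b = x"
proof -
  from assms have "\<exists>!c. op c b = x" unfolding is_quandle_def by blast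
  then show ?thesis unfolding rinv_def by (rule theI')
qed

lemma rinv_r: assumes "is_quandle op" shows "rinv op (op x b) b = x"
proof -
  from assms have "\<exists>!c. op c b = op x b" unfolding is_quandle_def by blast
  then show ?thesis unfolding rinv_def by (rule the1_equality) simp
qed

definition gstep :: "('l \<Rightarrow> 'q \<Rightarrow> 'q \<Rightarrow> 'q) \<Rightarrow> 'q \<Rightarrow> 'q \<Rightarrow> 'l \<times> bool \<Rightarrow> 'q" where
  "gstep ops b = (\<lambda>x (al, s). if s then ops al x b else rinv (ops al) x b)"

lemma step_comm:
  assumes quandle: "\<And>al. is_quandle (ops al)"
    and distrib: "\<And>al be a b c. ops be (ops al a b) c = ops al (ops be a c) (ops be b c)"
  shows "gstep ops b (gstep ops b x l1) l2 = gstep ops b (gstep ops b x l2) l1"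
proof -
  have idem: "\<And>al. ops al b b = b" using quandle unfolding is_quandle_def by blast
  have c: "\<And>al be x. ops be (ops al x b) b = ops al (ops be x b) b"
    using distrib idem by metis
  have c2: "\<And>al be x. rinv (ops al) (ops be x b) b = ops be (rinv (ops al) x b) b"
    by (metis c rinv_l rinv_r quandle)
  have c3: "\<And>al be x. rinv (ops al) (rinv (ops be) x b) b = rinv (ops be) (rinv (ops al) x b) b"
    by (metis c2 rinv_l rinv_r quandle)
  obtain a1 s1 a2 s2 where l: "l1 = (a1, s1)" "l2 = (a2, s2)" by fastforce
  show ?thesis unfolding gstep_def l by (cases s1; cases s2) (auto simp: c c2 c3)
qed

lemma star_eq: "star ops w a b = foldl (gstep ops b) a w"
  unfolding star_def gstep_def by simp

theorem corollary4p15: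
  fixes ops :: "'l \<Rightarrow> 'q \<Rightarrow> 'q \<Rightarrow> 'q"
  assumes quandle: "\<And>al. is_quandle (ops al)"
    and distrib: "\<And>al be a b c. ops be (ops al a b) c = ops al (ops be a c) (ops be b c)"
  shows "\<forall>w v :: 'l fword. star ops (w @ v) = star ops (v @ w)"
proof (intro allI ext)
  fix w v :: "'l fword" and a b
  have sc: "\<And>x l1 l2. gstep ops b (gstep ops b x l1) l2 = gstep ops b (gstep ops b x l2) l1"
    by (rule step_comm[of ops, OF quandle distrib])
  have one: "\<And>x l. foldl (gstep ops b) (gstep ops b x l) u = gstep ops b (foldl (gstep ops b) x u) l" for u
    by (induction u) (simp_all add: sc)
  have "foldl (gstep ops b) (foldl (gstep ops b) x w) v = foldl (gstep ops b) (foldl (gstep ops b) x v) w" for x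
  proof (induction w arbitrary: x)
    case Nil then show ?case by simp
  next
    case (Cons l w) then show ?case by (simp add: one)
  qed
  then show "star ops (w @ v) a b = star ops (v @ w) a b" by (simp add: star_eq)
qed

end
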